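(* For every $f=\sum_{n\ge0}f_n\mathtt{x}^n\in\mathbb{K}[[\mathtt{x}]]$ and every $(\mu_{+},\sigma_{+})\in\mathbb{K}[[\mathtt{x}]]^{+}\times\mathfrak{M}^{+}$, the series $\sum_{n\ge0}f_n(\mu_{+},\sigma_{+})^{\rtimes n}$ converges in $\mathbb{K}[[\mathtt{x}]]\times\mathfrak{M}$.
   Context: $\mathbb{K}$ is a field of characteristic zero (discrete topology); $\mathbb{K}[[\mathtt{x}]]$ has the $(\mathtt{x})$-adic topology given by the order valuation $\nu$ ($\nu(0)=+\infty$); $\mathfrak{M}:=\mathtt{x}\mathbb{K}[[\mathtt{x}]]$ (subspace topology); $\mathbb{K}[[\mathtt{x}]]\times\mathfrak{M}$ carries the product topology and componentwise vector space structure. $\mathbb{K}[[\mathtt{x}]]^{+}:=\mathfrak{M}$ (series with zero constant term) and $\mathfrak{M}^{+}:=\{\sigma\in\mathfrak{M}:\nu(\sigma)>1\}$. For $g=\sum g_n\mathtt{x}^n$ and $\sigma\in\mathfrak{M}$, $g\circ\sigma:=\sum g_n\sigma^n$. Product: $(\mu_1,\sigma_1)\rtimes(\mu_2,\sigma_2):=((\mu_1\circ\sigma_2)\mu_2,\sigma_1\circ\sigma_2)$; $(\mu,\sigma)^{\rtimes0}:=(1,\mathtt{x})$ and $(\mu,\sigma)^{\rtimes n}$ is the $n$-fold $\rtimes$-product. *)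

theory Defs
  imports "HOL-Computational_Algebra.Formal_Power_Series" "HOL-Library.Product_Plus"
begin

definition rtimes :: "'a::field_char_0 fps \<times> 'a fps \<Rightarrow> 'a fps \<times> 'a fps \<Rightarrow> 'a fps \<times> 'a fps" where
  "rtimes p q = ((fst p oo snd q) * fst q, snd p oo snd q)"

primrec rtpow :: "'a::field_char_0 fps \<times> 'a fps \<Rightarrow> nat \<Rightarrow> 'a fps \<times> 'a fps" where
  "rtpow p 0 = (1, fps_X)"
| "rtpow p (Suc n) = rtimes p (rtpow p n)"

definition pscale :: "'a::field_char_0 \<Rightarrow> 'a fps \<times> 'a fps \<Rightarrow> 'a fps \<times> 'a fps" where
  "pscale c p = (fps_const c * fst p, fps_const c * snd p)"

end

theory Submission
  imports Defs
begin

definition lo :: "nat \<Rightarrow> 'a::comm_ring_1 fps \<Rightarrow> bool" where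
  "lo m g \<longleftrightarrow> (\<forall>k<m. fps_nth (g) k = 0)"

lemma lo_factor: "lo m g \<Longrightarrow> g = fps_X^m * fps_shift m g"
  unfolding lo_def by (intro fps_ext) (simp add: fps_X_power_mult_nth)

lemma lo_Xmult: "lo m (fps_X^m * h)"
  unfolding lo_def by (simp add: fps_X_power_mult_nth)

lemma lo_mult: "lo a g \<Longrightarrow> lo b h \<Longrightarrow> lo (a+b) (g*h)"
proof -
  assume "lo a g" "lo b h"
  hence "g*h = fps_X^(a+b) * (fps_shift a g * fps_shift b h)"
    using lo_factor[of a g] lo_factor[of b h]
    by (metis (no_types, lifting) mult.assoc mult.left_commute power_add)
  thus ?thesis by (simp add: lo_Xmult)
qed

lemma lo_mono: "lo a g \<Longrightarrow> b \<le> a \<Longrightarrow> lo b g"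
  unfolding lo_def by auto

lemma lo_any: "lo 0 g" unfolding lo_def by auto

lemma lo_const: "lo m g \<Longrightarrow> lo m (fps_const c * g)"
  unfolding lo_def by simp

lemma compose_lo:
  fixes s h :: "'a::field_char_0 fps"
  assumes "fps_nth (s) 0 = 0"
  shows "(fps_X^j * h) oo s = s^j * (h oo s)"
  using assms fps_compose_power[OF assms, of fps_X j] by (simp add: fps_compose_mult_distrib fps_X_fps_compose_startby0)

lemma rtpow_lo:
  fixes \<mu> \<sigma> :: "'a::field_char_0 fps"
  assumes "lo 1 \<mu>" "lo 2 \<sigma>"
  shows "lo n (fst (rtpow (\<mu>, \<sigma>) n)) \<and> lo (n+1) (snd (rtpow (\<mu>, \<sigma>) n))"
proof (induction n)
  case 0
  then show ?case by (simp add: lo_def lo_any)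
next
  case (Suc n)
  define s where "s = snd (rtpow (\<mu>, \<sigma>) n)"
  define r where "r = fst (rtpow (\<mu>, \<sigma>) n)"
  have ls: "lo (n+1) s" and lr: "lo n r" using Suc s_def r_def by auto
  have s0: "fps_nth (s) 0 = 0" using ls unfolding lo_def by auto
  have m: "\<mu> oo s = s^1 * (fps_shift 1 \<mu> oo s)"
    using compose_lo[OF s0, of 1 "fps_shift 1 \<mu>"] lo_factor[OF assms(1)] by simp
  have sg: "\<sigma> oo s = s^2 * (fps_shift 2 \<sigma> oo s)"
    using compose_lo[OF s0, of 2 "fps_shift 2 \<sigma>"] lo_factor[OF assms(2)] by simp
  have "lo (1 + n) ((\<mu> oo s) * r)"
  proof (rule lo_mult[OF _ lr])
    have "lo ((n+1)+0) (s * (fps_shift 1 \<mu> oo s))" by (intro lo_mult ls lo_any)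
    thus "lo 1 (\<mu> oo s)" unfolding m by (auto intro: lo_mono)
  qed
  moreover have "lo ((n+1)+(n+1)+0) (\<sigma> oo s)"
    unfolding sg power2_eq_square by (intro lo_mult ls lo_any)
  ultimately show ?case
    by (auto simp: rtimes_def s_def r_def intro: lo_mono)
qed

lemma lo_sums:
  fixes a :: "nat \<Rightarrow> 'a::comm_ring_1 fps"
  assumes "\<And>n. lo n (a n)"
  shows "a sums Abs_fps (\<lambda>k. \<Sum>n\<le>k. fps_nth (a n) k)"
  unfolding sums_def
proof (rule tendsto_fpsI)
  fix k
  show "\<forall>\<^sub>F N in sequentially. fps_nth ((\<Sum>n<N. a n)) k = fps_nth (Abs_fps (\<lambda>k. \<Sum>n\<le>k. fps_nth (a n) k)) k"
    unfolding eventually_sequentially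
  proof (intro exI allI impI)
    fix N assume "Suc k \<le> N"
    have "fps_nth ((\<Sum>n<N. a n)) k = (\<Sum>n<N. fps_nth (a n) k)" by (simp add: fps_sum_nth)
    also have "\<dots> = (\<Sum>n\<le>k. fps_nth (a n) k)"
      by (rule sum.mono_neutral_right)
         (use \<open>Suc k \<le> N\<close> assms in \<open>auto simp: lo_def\<close>)
    finally show "fps_nth ((\<Sum>n<N. a n)) k = fps_nth (Abs_fps (\<lambda>k. \<Sum>n\<le>k. fps_nth (a n) k)) k" by simp
  qed
qed

theorem mainTheorem9:
  fixes f \<mu> \<sigma> :: "'a::field_char_0 fps"
  assumes "fps_nth \<mu> 0 = 0"
    and "fps_nth \<sigma> 0 = 0" and "fps_nth \<sigma> 1 = 0"
  shows "\<exists>L. (\<lambda>n. pscale (fps_nth f n) (rtpow (\<mu>, \<sigma>) n)) sums L \<and> fps_nth (snd L) 0 = 0"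
proof -
  have l1: "lo 1 \<mu>" using assms unfolding lo_def by auto
  have l2: "lo 2 \<sigma>" using assms unfolding lo_def by (auto simp: less_2_cases_iff)
  define x where "x n = fps_const (fps_nth (f) n) * fst (rtpow (\<mu>, \<sigma>) n)" for n
  define y where "y n = fps_const (fps_nth (f) n) * snd (rtpow (\<mu>, \<sigma>) n)" for n
  have lx: "lo n (x n)" and ly: "lo (n+1) (y n)" for n
    unfolding x_def y_def using rtpow_lo[OF l1 l2, of n] by (auto intro: lo_const)
  define A where "A = Abs_fps (\<lambda>k. \<Sum>n\<le>k. fps_nth (x n) k)"
  define B where "B = Abs_fps (\<lambda>k. \<Sum>n\<le>k. fps_nth (y n) k)"
  have sx: "x sums A" unfolding A_def by (rule lo_sums[OF lx])
  have sy: "y sums B" unfolding B_def by (rule lo_sums) (rule lo_mono[OF ly], simp)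
  have eq: "(\<lambda>n. pscale (fps_nth f n) (rtpow (\<mu>, \<sigma>) n)) = (\<lambda>n. (x n, y n))"
    by (simp add: pscale_def x_def y_def)
  have ps: "(\<Sum>n<N. (x n, y n)) = (\<Sum>n<N. x n, \<Sum>n<N. y n)" for N
    by (simp add: prod_eq_iff fst_sum snd_sum)
  have "(\<lambda>n. (x n, y n)) sums (A, B)"
    using sx sy unfolding sums_def ps by (rule tendsto_Pair)
  moreover have "fps_nth (B) 0 = 0" using ly[of 0] unfolding B_def lo_def by simp
  ultimately show ?thesis unfolding eq by auto
qed

end
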